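(* Let $\mu\in(0,1)$ and let $\beta:[0,\infty)\to(0,\infty)$ be positive, bounded, non-increasing with $\lim_{a\to\infty}a\beta(a)=\mu$, and suppose $\beta(a)=\frac{\mu}{1+a}+g(a)$ where $g\in L^1(0,\infty)$ and there exist $K_0,\alpha>0$ with $\int_a^\infty|g(s)|ds\le K_0(1+a)^{-\alpha}$ for all $a\ge0$. Let $B(a)=\int_0^a\beta$ and $W(\tau,b)=C(\tau)e^{-B(e^{\tau}b)}(1-b)^{\mu-1}$ on $[0,1)$ with $C(\tau)>0$ such that $\int_0^1W(\tau,b)db=1$. Then there exists $M>0$ such that for all $\tau\ge0$, $$\left|\mu\int_0^1\left[\frac{e^{\tau}b}{1+e^{\tau}b}-1\right]W(\tau,b)\,db\right|\le Me^{-(1-\mu)\tau}.$$ *)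

theory Defs
  imports "HOL-Analysis.Analysis"
begin

definition Bint :: "(real \<Rightarrow> real) \<Rightarrow> real \<Rightarrow> real" where
  "Bint \<beta> a = integral {0..a} \<beta>"

definition Wfun :: "real \<Rightarrow> (real \<Rightarrow> real) \<Rightarrow> (real \<Rightarrow> real) \<Rightarrow> real \<Rightarrow> real \<Rightarrow> real" where
  "Wfun \<mu> \<beta> C \<tau> b = C \<tau> * exp (- Bint \<beta> (exp \<tau> * b)) * (1 - b) powr (\<mu> - 1)"

end

theory Submission
  imports Defs
begin

lemma beta_integrable:
  fixes \<mu> :: real and \<beta> :: "real \<Rightarrow> real"
  assumes g_L1: "(\<lambda>a. \<beta> a - \<mu> / (1 + a)) absolutely_integrable_on {0..}"
    and a: "0 \<le> a"
  shows "\<beta> integrable_on {a..c}"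
proof -
  have g: "(\<lambda>a. \<beta> a - \<mu> / (1 + a)) integrable_on {a..c}"
    using g_L1 a by (intro integrable_on_subinterval[of _ "{0..}"])
      (auto simp: absolutely_integrable_on_def)
  have h: "(\<lambda>s. \<mu> / (1 + s)) integrable_on {a..c}"
    using a by (intro integrable_continuous_interval continuous_intros) auto
  have "(\<lambda>s. (\<beta> s - \<mu> / (1 + s)) + \<mu> / (1 + s)) integrable_on {a..c}"
    using integrable_add[OF g h] by simp
  then show ?thesis by simp
qed

lemma ln_has_integral:
  fixes \<mu> a c :: real
  assumes "0 \<le> a" "a \<le> c"
  shows "((\<lambda>s. \<mu> / (1 + s)) has_integral (\<mu> * ln (1 + c) - \<mu> * ln (1 + a))) {a..c}"
proof -
  have "((\<lambda>s. \<mu> / (1 + s)) has_integral (\<lambda>s. \<mu> * ln (1 + s)) c - (\<lambda>s. \<mu> * ln (1 + s)) a) {a..c}"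
  proof (rule fundamental_theorem_of_calculus[OF assms(2)])
    fix s assume s: "s \<in> {a..c}"
    then have "1 + s > 0" using assms by auto
    then have "((\<lambda>s. \<mu> * ln (1 + s)) has_real_derivative \<mu> / (1 + s)) (at s within {a..c})"
      by (auto intro!: derivative_eq_intros simp: field_simps)
    then show "((\<lambda>s. \<mu> * ln (1 + s)) has_vector_derivative \<mu> / (1 + s)) (at s within {a..c})"
      by (simp add: has_real_derivative_iff_has_vector_derivative)
  qed
  then show ?thesis by simp
qed

lemma Bint_diff:
  fixes \<mu> :: real and \<beta> :: "real \<Rightarrow> real" and K\<^sub>0 :: real
  assumes beta_pos: "\<forall>a\<ge>0. \<beta> a > 0"
    and g_L1: "(\<lambda>a. \<beta> a - \<mu> / (1 + a)) absolutely_integrable_on {0..}"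
    and G: "integral {0..} (\<lambda>s. \<bar>\<beta> s - \<mu> / (1 + s)\<bar>) \<le> K\<^sub>0"
    and ac: "0 \<le> a" "a \<le> c"
  shows "Bint \<beta> c - Bint \<beta> a \<le> \<mu> * (ln (1 + c) - ln (1 + a)) + K\<^sub>0"
    and "Bint \<beta> a \<le> Bint \<beta> c"
proof -
  have int0c: "\<beta> integrable_on {0..c}" using beta_integrable[OF g_L1] by simp
  have comb: "integral {0..a} \<beta> + integral {a..c} \<beta> = integral {0..c} \<beta>"
    using Henstock_Kurzweil_Integration.integral_combine[OF _ _ int0c, of a] ac by simp
  then have diff: "Bint \<beta> c - Bint \<beta> a = integral {a..c} \<beta>"
    unfolding Bint_def by simp
  have intac: "\<beta> integrable_on {a..c}" using beta_integrable[OF g_L1 ac(1)] .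
  have "integral {a..c} \<beta> \<ge> 0"
  proof (intro integral_nonneg intac)
    fix x assume "x \<in> {a..c}"
    then have "x \<ge> 0" using ac by auto
    then show "0 \<le> \<beta> x" using beta_pos by (simp add: less_imp_le)
  qed
  then show "Bint \<beta> a \<le> Bint \<beta> c" using diff by simp
  have gac: "(\<lambda>a. \<beta> a - \<mu> / (1 + a)) integrable_on {a..c}"
    using g_L1 ac by (intro integrable_on_subinterval[of _ "{0..}"])
      (auto simp: absolutely_integrable_on_def)
  have absg: "(\<lambda>s. \<bar>\<beta> s - \<mu> / (1 + s)\<bar>) integrable_on {0..}"
    using g_L1 by (auto simp: absolutely_integrable_on_def)
  have absgac: "(\<lambda>s. \<bar>\<beta> s - \<mu> / (1 + s)\<bar>) integrable_on {a..c}"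
    using absg ac by (intro integrable_on_subinterval[of _ "{0..}"]) auto
  have "integral {a..c} (\<lambda>s. \<beta> s - \<mu> / (1 + s)) \<le> integral {a..c} (\<lambda>s. \<bar>\<beta> s - \<mu> / (1 + s)\<bar>)"
    by (intro integral_le gac absgac) auto
  also have "\<dots> \<le> integral {0..} (\<lambda>s. \<bar>\<beta> s - \<mu> / (1 + s)\<bar>)"
    using ac by (intro integral_subset_le absgac absg) auto
  also have "\<dots> \<le> K\<^sub>0" by (rule G)
  finally have g1: "integral {a..c} (\<lambda>s. \<beta> s - \<mu> / (1 + s)) \<le> K\<^sub>0" .
  have hI: "integral {a..c} (\<lambda>s. \<mu> / (1 + s)) = \<mu> * ln (1 + c) - \<mu> * ln (1 + a)"
    using ln_has_integral[OF ac] by (rule integral_unique)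
  have hint: "(\<lambda>s. \<mu> / (1 + s)) integrable_on {a..c}"
    using ln_has_integral[OF ac] by blast
  have "integral {a..c} \<beta> = integral {a..c} (\<lambda>s. (\<beta> s - \<mu> / (1 + s)) + \<mu> / (1 + s))"
    by simp
  also have "\<dots> = integral {a..c} (\<lambda>s. \<beta> s - \<mu> / (1 + s)) + integral {a..c} (\<lambda>s. \<mu> / (1 + s))"
    by (rule integral_add[OF gac hint])
  finally show "Bint \<beta> c - Bint \<beta> a \<le> \<mu> * (ln (1 + c) - ln (1 + a)) + K\<^sub>0"
    using diff g1 hI by (simp add: algebra_simps)
qed

lemma rpow_int:
  fixes x \<mu> :: real
  assumes x: "x > 0" and mu: "\<mu> > 0"
  shows "integral {0..1/2} (\<lambda>b. (1 + x * b) powr (- \<mu> - 1)) \<le> 1 / (\<mu> * x)"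
    and "(\<lambda>b. (1 + x * b) powr (- \<mu> - 1)) integrable_on {0..1/2}"
proof -
  define F where "F b = - ((1 + x * b) powr (- \<mu>)) / (\<mu> * x)" for b
  have hi: "((\<lambda>b. (1 + x * b) powr (- \<mu> - 1)) has_integral F (1/2) - F 0) {0..1/2}"
  proof (rule fundamental_theorem_of_calculus)
    fix b :: real assume b: "b \<in> {0..1/2}"
    then have pos: "1 + x * b > 0" using x by (auto intro!: add_pos_nonneg)
    have "(F has_real_derivative (- ((- \<mu>) * (1 + x * b) powr (- \<mu> - 1) * x)) / (\<mu> * x)) (at b within {0..1/2})"
      unfolding F_def using pos
      by (auto intro!: derivative_eq_intros)
    moreover have "(- ((- \<mu>) * (1 + x * b) powr (- \<mu> - 1) * x)) / (\<mu> * x) = (1 + x * b) powr (- \<mu> - 1)"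
      using x mu by (simp add: field_simps)
    ultimately show "(F has_vector_derivative (1 + x * b) powr (- \<mu> - 1)) (at b within {0..1/2})"
      by (simp add: has_real_derivative_iff_has_vector_derivative)
  qed simp
  then show "(\<lambda>b. (1 + x * b) powr (- \<mu> - 1)) integrable_on {0..1/2}" by blast
  have "integral {0..1/2} (\<lambda>b. (1 + x * b) powr (- \<mu> - 1)) = F (1/2) - F 0"
    using hi by (rule integral_unique)
  also have "\<dots> = 1 / (\<mu> * x) - (1 + x / 2) powr (- \<mu>) / (\<mu> * x)"
    unfolding F_def by (simp add: field_simps)
  also have "\<dots> \<le> 1 / (\<mu> * x)"
    using x mu by (simp add: divide_nonneg_pos)
  finally show "integral {0..1/2} (\<lambda>b. (1 + x * b) powr (- \<mu> - 1)) \<le> 1 / (\<mu> * x)" .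
qed

theorem lemma8:
  fixes \<mu> :: real and \<beta> C :: "real \<Rightarrow> real" and K\<^sub>0 \<alpha> :: real
  assumes mu: "0 < \<mu>" "\<mu> < 1"
    and beta_pos: "\<forall>a\<ge>0. \<beta> a > 0"
    and beta_bdd: "\<exists>K. \<forall>a\<ge>0. \<beta> a \<le> K"
    and beta_noninc: "\<forall>x y. 0 \<le> x \<longrightarrow> x \<le> y \<longrightarrow> \<beta> y \<le> \<beta> x"
    and beta_lim: "((\<lambda>a. a * \<beta> a) \<longlongrightarrow> \<mu>) at_top"
    and g_L1: "(\<lambda>a. \<beta> a - \<mu> / (1 + a)) absolutely_integrable_on {0..}"
    and K0: "K\<^sub>0 > 0" and alpha: "\<alpha> > 0"
    and g_tail: "\<forall>a\<ge>0. integral {a..} (\<lambda>s. \<bar>\<beta> s - \<mu> / (1 + s)\<bar>) \<le> K\<^sub>0 * (1 + a) powr (- \<alpha>)"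
    and C_pos: "\<forall>\<tau>\<ge>0. C \<tau> > 0"
    and W_norm: "\<forall>\<tau>\<ge>0. integral {0..<1} (Wfun \<mu> \<beta> C \<tau>) = 1"
  shows "\<exists>M>0. \<forall>\<tau>\<ge>0.
    \<bar>\<mu> * integral {0..<1} (\<lambda>b. (exp \<tau> * b / (1 + exp \<tau> * b) - 1) * Wfun \<mu> \<beta> C \<tau> b)\<bar>
      \<le> M * exp (- (1 - \<mu>) * \<tau>)"
proof -
  have G: "integral {0..} (\<lambda>s. \<bar>\<beta> s - \<mu> / (1 + s)\<bar>) \<le> K\<^sub>0"
    using g_tail[rule_format, of 0] by simp
  define K1 where "K1 = 8 * exp K\<^sub>0 / \<mu>"
  have K1: "K1 > 0" unfolding K1_def using mu by simp
  show ?thesis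
  proof (intro exI[of _ "\<mu> * (K1 + 2)"] conjI allI impI)
    show "\<mu> * (K1 + 2) > 0" using mu K1 by simp
    fix \<tau> :: real assume tau: "\<tau> \<ge> 0"
    define x where "x = exp \<tau>"
    have x1: "x \<ge> 1" unfolding x_def using tau by simp
    define c where "c = C \<tau>"
    have c: "c > 0" unfolding c_def using C_pos tau by simp
    define E where "E = exp (- Bint \<beta> x)"
    have E: "E > 0" unfolding E_def by simp
    define W where "W = Wfun \<mu> \<beta> C \<tau>"
    have Wdef: "W b = c * exp (- Bint \<beta> (x * b)) * (1 - b) powr (\<mu> - 1)" for b
      unfolding W_def Wfun_def c_def x_def by simp
    have Wnn: "W b \<ge> 0" for b unfolding Wdef using c by simp
    have W01': "integral {0..<1} W = 1" using W_norm tau unfolding W_def by simp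
    have negl: "negligible ({0..1::real} - {0..<1})"
      by (rule negligible_subset[of "{1}"]) auto
    have Wint': "W integrable_on {0..<1}"
      using W01' not_integrable_integral by fastforce
    have Wint: "W integrable_on {0..1}"
      using Wint' integrable_spike_set_eq[of "{0..<1::real}" "{0..1}" W] negl
      by (metis Diff_empty Un_empty_left atLeastLessThan_subseteq_atLeastAtMost_iff order_refl
          Diff_eq_empty_iff)
    have W01: "integral {0..1} W = 1"
      using W01' integral_subset_negligible[of "{0..<1::real}" "{0..1}" W] negl by fastforce
    have lowpt: "W b \<ge> c * E" if b: "b \<in> {1/2..3/4}" for b
    proof -
      have "Bint \<beta> (x * b) \<le> Bint \<beta> x"
        using Bint_diff(2)[OF beta_pos g_L1 G, of "x * b" x] b x1 by auto
      then have e: "E \<le> exp (- Bint \<beta> (x * b))" unfolding E_def by simp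
      have p: "1 \<le> (1 - b) powr (\<mu> - 1)"
      proof -
        have "(1 - b) powr (1 - \<mu>) \<le> 1"
          using b mu by (intro powr_le1) auto
        moreover have "(1 - b) powr (\<mu> - 1) = 1 / (1 - b) powr (1 - \<mu>)"
          using b by (simp add: powr_minus_divide[symmetric] )
        moreover have "(1 - b) powr (1 - \<mu>) > 0" using b by simp
        ultimately show ?thesis by simp
      qed
      have "c * E * 1 \<le> c * exp (- Bint \<beta> (x * b)) * (1 - b) powr (\<mu> - 1)"
        using c E e p by (intro mult_mono) auto
      then show ?thesis unfolding Wdef by simp
    qed
    have cE: "c * E \<le> 4"
    proof -
      have i1: "W integrable_on {1/2..3/4}"
        by (rule integrable_subinterval_real[OF Wint]) auto
      have "integral {1/2..3/4::real} (\<lambda>_. c * E) \<le> integral {1/2..3/4} W"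
        using lowpt by (intro integral_le i1) auto
      also have "\<dots> \<le> integral {0..1} W"
        using Wnn by (intro integral_subset_le i1 Wint) auto
      finally show ?thesis using W01 by simp
    qed
    define V where "V b = W b / (1 + x * b)" for b
    have Vnn: "V b \<ge> 0" if "b \<ge> 0" for b unfolding V_def using Wnn that x1 by simp
    have Vint: "V integrable_on {0..1}"
    proof -
      have m: "(\<lambda>b. 1 / (1 + x * b)) \<in> borel_measurable (lebesgue_on {0..1})"
        using x1 by (intro continuous_imp_measurable_on_sets_lebesgue continuous_intros)
          (auto, smt (verit) mult_nonneg_nonneg)
      have bd: "bounded ((\<lambda>b. 1 / (1 + x * b)) ` {0..1})"
      proof -
        have "\<forall>b\<in>{0..1}. norm (1 / (1 + x * b)) \<le> 1"
        proof
          fix b :: real assume "b \<in> {0..1}"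
          then have "x * b \<ge> 0" using x1 by simp
          then show "norm (1 / (1 + x * b)) \<le> 1" by simp
        qed
        then show ?thesis by (intro boundedI[of _ 1]) auto
      qed
      have "(\<lambda>b. 1 / (1 + x * b) * W b) absolutely_integrable_on {0..1}"
        by (intro absolutely_integrable_bounded_measurable_product_real m bd
            nonnegative_absolutely_integrable_1 Wint Wnn) auto
      then show ?thesis unfolding V_def absolutely_integrable_on_def by simp
    qed
    have part2: "integral {1/2..1} V \<le> 2 / x"
    proof -
      have i1: "W integrable_on {1/2..1}"
        by (rule integrable_subinterval_real[OF Wint]) auto
      have i2: "V integrable_on {1/2..1}"
        by (rule integrable_subinterval_real[OF Vint]) auto
      have "integral {1/2..1} V \<le> integral {1/2..1} (\<lambda>b. (2 / x) * W b)"
      proof (intro integral_le i2 integrable_on_mult_right i1)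
        fix b :: real assume b: "b \<in> {1/2..1}"
        have "x * (1/2) \<le> x * b" using b x1 by (intro mult_left_mono) auto
        then have "x \<le> 2 * (1 + x * b)" by (simp add: algebra_simps)
        then have "1 / (1 + x * b) \<le> 2 / x" using x1 b
          by (simp add: field_simps)
        then show "V b \<le> 2 / x * W b" unfolding V_def
          using Wnn[of b] mult_right_mono by (fastforce simp: divide_inverse mult.commute)
      qed
      also have "\<dots> = (2 / x) * integral {1/2..1} W" by simp
      finally have s1: "integral {1/2..1} V \<le> (2 / x) * integral {1/2..1} W" .
      have "integral {1/2..1} W \<le> integral {0..1} W"
        using Wnn by (intro integral_subset_le i1 Wint) auto
      then have "(2 / x) * integral {1/2..1} W \<le> (2 / x) * 1"
        using W01 x1 by (intro mult_left_mono) auto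
      then show ?thesis using s1 by simp
    qed
    define A where "A = c * E * exp K\<^sub>0 * 2 powr (1 - \<mu>) * (1 + x) powr \<mu>"
    have part1: "integral {0..1/2} V \<le> A / (\<mu> * x)"
    proof -
      have i2: "V integrable_on {0..1/2}"
        by (rule integrable_subinterval_real[OF Vint]) auto
      have x0: "x > 0" using x1 by simp
      have "integral {0..1/2} V \<le> integral {0..1/2} (\<lambda>b. A * (1 + x * b) powr (- \<mu> - 1))"
      proof (intro integral_le i2 integrable_on_mult_right rpow_int(2)[OF x0 mu(1)])
        fix b :: real assume b: "b \<in> {0..1/2}"
        have pos: "1 + x * b > 0" using b x1 by (auto intro!: add_pos_nonneg)
        have d: "Bint \<beta> x - Bint \<beta> (x * b) \<le> \<mu> * (ln (1 + x) - ln (1 + x * b)) + K\<^sub>0"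
          using Bint_diff(1)[OF beta_pos g_L1 G, of "x * b" x] b x1 by auto
        have "exp (- Bint \<beta> (x * b)) = E * exp (Bint \<beta> x - Bint \<beta> (x * b))"
          unfolding E_def by (simp add: exp_diff exp_minus field_simps)
        also have "\<dots> \<le> E * exp (\<mu> * (ln (1 + x) - ln (1 + x * b)) + K\<^sub>0)"
          using d E by simp
        also have "\<dots> = E * exp K\<^sub>0 * (1 + x) powr \<mu> * (1 + x * b) powr (- \<mu>)"
          using pos x1 by (simp add: powr_def exp_add exp_diff right_diff_distrib powr_minus
              exp_minus field_simps)
        finally have e: "exp (- Bint \<beta> (x * b)) \<le> E * exp K\<^sub>0 * (1 + x) powr \<mu> * (1 + x * b) powr (- \<mu>)" .
        have p: "(1 - b) powr (\<mu> - 1) \<le> 2 powr (1 - \<mu>)"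
        proof -
          have "(1 - b) powr (\<mu> - 1) = (1 / (1 - b)) powr (1 - \<mu>)"
            using b by (simp add: powr_divide powr_minus_divide[symmetric])
          also have "\<dots> \<le> 2 powr (1 - \<mu>)"
            using b mu by (intro powr_mono2) (auto simp: field_simps)
          finally show ?thesis .
        qed
        have "W b \<le> c * (E * exp K\<^sub>0 * (1 + x) powr \<mu> * (1 + x * b) powr (- \<mu>)) * 2 powr (1 - \<mu>)"
          unfolding Wdef using c e p E by (intro mult_mono) auto
        also have "\<dots> = A * (1 + x * b) powr (- \<mu>)" unfolding A_def by simp
        finally have "V b \<le> A * (1 + x * b) powr (- \<mu>) / (1 + x * b)"
          unfolding V_def using pos by (simp add: divide_right_mono)
        also have "\<dots> = A * (1 + x * b) powr (- \<mu> - 1)"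
          using pos by (simp add: powr_diff)
        finally show "V b \<le> A * (1 + x * b) powr (- \<mu> - 1)" .
      qed
      also have "\<dots> = A * integral {0..1/2} (\<lambda>b. (1 + x * b) powr (- \<mu> - 1))" by simp
      also have "\<dots> \<le> A * (1 / (\<mu> * x))"
        unfolding A_def using rpow_int(1)[OF x0 mu(1)] c E
        by (intro mult_left_mono) auto
      finally show ?thesis by simp
    qed
    have Vsplit: "integral {0..1} V = integral {0..1/2} V + integral {1/2..1} V"
      using Henstock_Kurzweil_Integration.integral_combine[OF _ _ Vint, of "1/2"] by simp
    have xpow: "x powr (\<mu> - 1) = exp (- (1 - \<mu>) * \<tau>)"
      unfolding x_def by (simp add: powr_def algebra_simps)
    have A_bd: "A / (\<mu> * x) \<le> K1 * x powr (\<mu> - 1)"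
    proof -
      have "(1 + x) powr \<mu> \<le> (2 * x) powr \<mu>"
        using x1 mu by (intro powr_mono2) auto
      also have "\<dots> = 2 powr \<mu> * x powr \<mu>" using x1 by (simp add: powr_mult)
      finally have "(1 + x) powr \<mu> \<le> 2 powr \<mu> * x powr \<mu>" .
      then have "A \<le> 4 * exp K\<^sub>0 * 2 powr (1 - \<mu>) * (2 powr \<mu> * x powr \<mu>)"
        unfolding A_def using cE by (intro mult_mono) auto
      also have "\<dots> = 8 * exp K\<^sub>0 * x powr \<mu>"
        by (simp add: powr_add[symmetric])
      finally have "A / (\<mu> * x) \<le> 8 * exp K\<^sub>0 * x powr \<mu> / (\<mu> * x)"
        using mu x1 by (intro divide_right_mono) auto
      also have "\<dots> = K1 * x powr (\<mu> - 1)"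
        unfolding K1_def using x1 mu by (simp add: powr_diff)
      finally show ?thesis .
    qed
    have two_bd: "2 / x \<le> 2 * x powr (\<mu> - 1)"
    proof -
      have "x powr (-1) \<le> x powr (\<mu> - 1)" using x1 mu by (intro powr_mono) auto
      then show ?thesis using x1 by (simp add: powr_minus divide_inverse)
    qed
    have J: "integral {0..1} V \<le> (K1 + 2) * exp (- (1 - \<mu>) * \<tau>)"
      using Vsplit part1 part2 A_bd two_bd xpow by (simp add: algebra_simps)
    have Jnn: "integral {0..1} V \<ge> 0"
      using Vnn by (intro integral_nonneg Vint) auto
    have "integral {0..<1} (\<lambda>b. (exp \<tau> * b / (1 + exp \<tau> * b) - 1) * Wfun \<mu> \<beta> C \<tau> b)
        = integral {0..<1} (\<lambda>b. - V b)"
    proof (rule integral_cong)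
      fix b :: real assume b: "b \<in> {0..<1}"
      then have "1 + x * b > 0" using x1 by (auto intro!: add_pos_nonneg)
      then show "(exp \<tau> * b / (1 + exp \<tau> * b) - 1) * Wfun \<mu> \<beta> C \<tau> b = - V b"
        unfolding V_def W_def x_def[symmetric] by (simp add: field_simps)
    qed
    also have "\<dots> = - integral {0..<1} V" by (simp add: integral_neg)
    also have "integral {0..<1} V = integral {0..1} V"
      using integral_subset_negligible[of "{0..<1::real}" "{0..1}" V] negl by fastforce
    finally have eq: "integral {0..<1} (\<lambda>b. (exp \<tau> * b / (1 + exp \<tau> * b) - 1) * Wfun \<mu> \<beta> C \<tau> b)
        = - integral {0..1} V" .
    show "\<bar>\<mu> * integral {0..<1} (\<lambda>b. (exp \<tau> * b / (1 + exp \<tau> * b) - 1) * Wfun \<mu> \<beta> C \<tau> b)\<bar>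
      \<le> \<mu> * (K1 + 2) * exp (- (1 - \<mu>) * \<tau>)"
      unfolding eq using Jnn J mu by (simp add: abs_mult mult_left_mono mult.assoc)
  qed
qed

end
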